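(* Let $n\ge 1$, $0\le t$, $l\ge 0$ with $t+l\le n$, and let $C_1\subseteq\mathbb F_2^n$ be a linear code of dimension $t$. Let $C_2(X)$ be a random linear code of dimension $t+l$ with $C_1\subseteq C_2(X)\subseteq\mathbb F_2^n$, whose distribution satisfies: for every $x\in\mathbb F_2^n\setminus C_1$, $$\Pr_X[x\in C_2(X)]=\frac{2^{l+t}-2^t}{2^n-2^t}.$$ Then for every additive channel $W$ on $\mathbb F_2^n$ with noise distribution $P_W$, $$\mathbb E_X\big[1-P_W(\Gamma_{C_2(X)}+C_1)\big]\le \sum_{k=0}^n \tilde P_W(k)\, g(2^{l+t-n}\mid n,k).$$
   Context: For $x\in\mathbb F_2^n$, $|x|$ is its Hamming weight and $T_n^k=\{x\in\mathbb F_2^n:|x|=k\}$. $h(p)=-p\log_2p-(1-p)\log_2(1-p)$ is the binary entropy. An additive channel $W$ on $\mathbb F_2^n$ is one with $W(y|x)=P_W(y-x)$ for a probability distribution $P_W$ on $\mathbb F_2^n$; set $\tilde P_W(k)=P_W(T_n^k)$. For a linear code $C_2\subseteq\mathbb F_2^n$, $\Gamma_{C_2}\subseteq\mathbb F_2^n$ denotes a set of coset representatives of $\mathbb F_2^n/C_2$ obtained by choosing in each coset $[x]_2=x+C_2$ an element of minimum Hamming weight, i.e. $\Gamma([x]_2)=x+\operatorname{argmin}_{x_2\in C_2}|x+x_2|$ (ties broken arbitrarily); $\Gamma_{C_2}+C_1=\{\gamma+c:\gamma\in\Gamma_{C_2},c\in C_1\}$. The quantity $1-P_W(\Gamma_{C_2}+C_1)$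 is the error probability of transmitting $C_2/C_1$ with minimum-distance coset decoding. Define $g(x\mid n,k)=\min\{2^{nh(k/n)}x,1\}$ if $k\le\lfloor n/2\rfloor$ and $g(x\mid n,k)=1$ if $k>\lfloor n/2\rfloor$. *)

theory Defs
  imports "HOL-Probability.Probability"
begin

text \<open>Vectors of F_2^n are modelled as subsets of a finite index type 'n with
  n = CARD('n): a vector is identified with its support.\<close>

definition vadd :: "'n set \<Rightarrow> 'n set \<Rightarrow> 'n set" where
  "vadd x y = (x - y) \<union> (y - x)"

definition hweight :: "'n::finite set \<Rightarrow> nat" where
  "hweight x = card x"

definition lin_code :: "'n set set \<Rightarrow> bool" where
  "lin_code C \<longleftrightarrow> {} \<in> C \<and> (\<forall>x\<in>C. \<forall>y\<in>C. vadd x y \<in> C)"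

definition lin_code_dim :: "'n::finite set set \<Rightarrow> nat \<Rightarrow> bool" where
  "lin_code_dim C d \<longleftrightarrow> lin_code C \<and> card C = 2 ^ d"

text \<open>Ties are broken arbitrarily (G is arbitrary subject to these constraints).\<close>
definition min_coset_rep :: "'n::finite set set \<Rightarrow> ('n set \<Rightarrow> 'n set) \<Rightarrow> bool" where
  "min_coset_rep C G \<longleftrightarrow>
     (\<forall>x. (\<exists>c\<in>C. G x = vadd x c) \<and> (\<forall>c\<in>C. hweight (G x) \<le> hweight (vadd x c))) \<and>
     (\<forall>x y. vadd x y \<in> C \<longrightarrow> G x = G y)"

text \<open>Gamma_C + C_1, where Gamma_C = range G is the set of coset representatives.\<close>
definition rep_plus :: "('n set \<Rightarrow> 'n set) \<Rightarrow> 'n set set \<Rightarrow> 'n set set" where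
  "rep_plus G C1 = {vadd \<gamma> c | \<gamma> c. \<gamma> \<in> range G \<and> c \<in> C1}"

definition bin_entropy :: "real \<Rightarrow> real" where
  "bin_entropy p = - p * log 2 p - (1 - p) * log 2 (1 - p)"

definition gfun :: "real \<Rightarrow> nat \<Rightarrow> nat \<Rightarrow> real" where
  "gfun x n k = (if k \<le> n div 2
                 then min (2 powr (real n * bin_entropy (real k / real n)) * x) 1
                 else 1)"

end

theory Submission
  imports Defs
begin

lemma entropy_bound:
  fixes N k :: nat
  assumes N: "N \<ge> 1" and k: "2 * k \<le> N"
  shows "(\<Sum>j\<le>k. real (N choose j)) \<le> 2 powr (real N * bin_entropy (real k / real N))"
proof (cases "k = 0")
  case True
  then show ?thesis by (simp add: bin_entropy_def)
next
  case False
  define p where "p = real k / real N"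
  have p0: "0 < p" using False N by (simp add: p_def)
  have p1: "p \<le> 1 - p" using k N by (simp add: p_def field_simps)
  have p2: "0 < 1 - p" using p0 p1 by linarith
  have Np: "real N * p = k" using N by (simp add: p_def)
  have Nq: "real N * (1 - p) = real (N - k)" using N k by (simp add: p_def field_simps of_nat_diff)
  have eq: "2 powr (real N * bin_entropy p) = 1 / (p ^ k * (1 - p) ^ (N - k))"
  proof -
    have "real N * bin_entropy p = - ((real N * p) * log 2 p) - ((real N * (1 - p)) * log 2 (1 - p))"
      unfolding bin_entropy_def by (simp add: algebra_simps)
    then have "real N * bin_entropy p = - (real k * log 2 p) - (real (N - k) * log 2 (1 - p))"
      unfolding Np Nq .
    then have "2 powr (real N * bin_entropy p) = inverse (2 powr (log 2 p * real k)) * inverse (2 powr (log 2 (1-p) * real (N - k)))"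
      by (simp add: powr_diff powr_minus mult.commute divide_inverse)
    also have "\<dots> = inverse (p ^ k) * inverse ((1 - p) ^ (N - k))"
      using p0 p2 by (simp add: powr_powr[symmetric] powr_realpow)
    finally show ?thesis by (simp add: field_simps)
  qed
  have "(\<Sum>j\<le>k. real (N choose j)) * (p ^ k * (1 - p) ^ (N - k))
        \<le> (\<Sum>j\<le>k. real (N choose j) * p ^ j * (1 - p) ^ (N - j))"
    unfolding sum_distrib_right
  proof (rule sum_mono)
    fix j assume "j \<in> {..k}"
    then have jk: "j \<le> k" by simp
    have "p ^ k * (1 - p) ^ (N - k) = p ^ j * (p ^ (k - j) * (1 - p) ^ (N - k))"
      using jk by (simp add: power_add[symmetric])
    also have "\<dots> \<le> p ^ j * ((1 - p) ^ (k - j) * (1 - p) ^ (N - k))"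
      using p0 p1 p2 by (intro mult_left_mono mult_right_mono power_mono) auto
    also have "\<dots> = p ^ j * (1 - p) ^ (N - j)"
      using jk k by (simp add: power_add[symmetric])
    finally show "real (N choose j) * (p ^ k * (1 - p) ^ (N - k)) \<le> real (N choose j) * p ^ j * (1 - p) ^ (N - j)"
      by (simp add: mult.assoc mult_left_mono)
  qed
  also have "\<dots> \<le> (\<Sum>j\<le>N. real (N choose j) * p ^ j * (1 - p) ^ (N - j))"
    using k p0 p2 by (intro sum_mono2) auto
  also have "\<dots> = (p + (1 - p)) ^ N" by (simp only: binomial_ring)
  also have "\<dots> = 1" by simp
  finally have "(\<Sum>j\<le>k. real (N choose j)) * (p ^ k * (1 - p) ^ (N - k)) \<le> 1" .
  moreover have "0 < p ^ k * (1 - p) ^ (N - k)" using p0 p2 by simp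
  ultimately show ?thesis unfolding p_def[symmetric] eq by (simp add: field_simps)
qed

lemma vadd_simps: "vadd e (vadd e x) = x" "vadd x {} = x" "vadd (vadd e c) c = e"
  unfolding vadd_def by auto

lemma vadd_comm: "vadd x y = vadd y x" unfolding vadd_def by auto

lemma bad_witness:
  assumes "min_coset_rep C2 G'" "lin_code C2" "e \<notin> rep_plus G' C1"
  shows "\<exists>x. x \<in> C2 \<and> x \<notin> C1 \<and> card (vadd e x) \<le> card e"
proof -
  from assms(1) obtain c where c: "c \<in> C2" "G' e = vadd e c" and
    mn: "\<forall>c\<in>C2. hweight (G' e) \<le> hweight (vadd e c)"
    unfolding min_coset_rep_def by blast
  have "{} \<in> C2" using assms(2) unfolding lin_code_def by blast
  then have "card (G' e) \<le> card e" using mn by (auto simp: hweight_def vadd_simps dest: bspec[of _ _ "{}"])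
  moreover have "c \<notin> C1"
  proof
    assume "c \<in> C1"
    then have "vadd (G' e) c \<in> rep_plus G' C1" unfolding rep_plus_def by blast
    then show False using assms(3) c(2) by (simp add: vadd_simps)
  qed
  ultimately show ?thesis using c by auto
qed

lemma count_ball:
  fixes e :: "'n::finite set"
  shows "card {x. card (vadd e x) \<le> k} = (\<Sum>j\<le>k. CARD('n) choose j)"
proof -
  have "{x. card (vadd e x) \<le> k} = vadd e ` {y. card y \<le> k}"
    by (auto simp: vadd_simps image_iff intro!: exI[of _ "vadd e _"])
  moreover have "inj (vadd e)" by (metis injI vadd_simps(1))
  ultimately have "card {x. card (vadd e x) \<le> k} = card {y::'n set. card y \<le> k}"
    by (simp add: card_image inj_on_subset)
  also have "{y::'n set. card y \<le> k} = (\<Union>j\<in>{..k}. {y. card y = j})" by auto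
  also have "card \<dots> = (\<Sum>j\<le>k. card {y::'n set. card y = j})"
    by (rule card_UN_disjoint) auto
  also have "\<dots> = (\<Sum>j\<le>k. CARD('n) choose j)"
    using n_subsets[of "UNIV::'n set"] by simp
  finally show ?thesis .
qed

lemma prob_as_sum:
  fixes M :: "'a::finite pmf"
  shows "measure_pmf.prob M A = (\<Sum>x\<in>UNIV. pmf M x * (if x \<in> A then 1 else 0))"
proof -
  have "measure_pmf.prob M A = sum (pmf M) A" by (simp add: measure_measure_pmf_finite)
  also have "\<dots> = sum (pmf M) {x\<in>UNIV. x \<in> A}" by simp
  also have "\<dots> = (\<Sum>x\<in>UNIV. if x \<in> A then pmf M x else 0)" by (rule sum.inter_filter) simp
  finally show ?thesis by (simp add: if_distrib cong: if_cong)
qed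

lemma alpha_le:
  fixes N a b :: nat
  assumes "a \<le> N" "b \<le> a"
  shows "((2::real) ^ a - 2 ^ b) / (2 ^ N - 2 ^ b) \<le> 2 powr (real a - real N)"
proof -
  have x0: "2 powr (real a - real N) = 2 ^ a / 2 ^ N"
    by (simp add: powr_diff powr_realpow)
  have ab: "(2::real) ^ b \<le> 2 ^ a" "(2::real) ^ a \<le> 2 ^ N" using assms by (simp_all add: power_increasing)
  show ?thesis
  proof (cases "(2::real) ^ N = 2 ^ b")
    case True then show ?thesis unfolding x0 by simp
  next
    case False
    then have lt: "(2::real) ^ b < 2 ^ N" using ab by linarith
    have "(2 ^ a - 2 ^ b) * 2 ^ N \<le> (2::real) ^ a * (2 ^ N - 2 ^ b)"
      using ab by (simp add: algebra_simps)
    then show ?thesis unfolding x0 using lt by (simp add: field_simps)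
  qed
qed

lemma alpha_nonneg:
  fixes N a b :: nat
  assumes "a \<le> N" "b \<le> a"
  shows "0 \<le> ((2::real) ^ a - 2 ^ b) / (2 ^ N - 2 ^ b)"
proof -
  have ab: "(2::real) ^ b \<le> 2 ^ a" "(2::real) ^ a \<le> 2 ^ N" using assms by (simp_all add: power_increasing)
  then show ?thesis by (intro divide_nonneg_nonneg) auto
qed

theorem lemma1:
  fixes C1 :: "'n::finite set set"
    and Q :: "'n set set pmf"
    and G :: "'n set set \<Rightarrow> 'n set \<Rightarrow> 'n set"
    and PW :: "'n set pmf"
    and t l :: nat
  assumes "t + l \<le> CARD('n)"
    and "lin_code_dim C1 t"
    and "\<forall>C2\<in>set_pmf Q. lin_code_dim C2 (t + l) \<and> C1 \<subseteq> C2"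
    and "\<forall>x. x \<notin> C1 \<longrightarrow>
           measure_pmf.prob Q {C2. x \<in> C2} =
             (2 ^ (l + t) - 2 ^ t) / (2 ^ CARD('n) - 2 ^ t)"
    and "\<forall>C2\<in>set_pmf Q. min_coset_rep C2 (G C2)"
  shows "measure_pmf.expectation Q
           (\<lambda>C2. 1 - measure_pmf.prob PW (rep_plus (G C2) C1))
         \<le> (\<Sum>k\<le>CARD('n). measure_pmf.prob PW {e. hweight e = k}
                            * gfun (2 powr (real (l + t) - real CARD('n))) CARD('n) k)"
proof -
  define N where "N = CARD('n)"
  define S where "S C = rep_plus (G C) C1" for C
  define x0 where "x0 = 2 powr (real (l + t) - real N)"
  define \<alpha> :: real where "\<alpha> = (2 ^ (l + t) - 2 ^ t) / (2 ^ N - 2 ^ t)"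
  have N1: "N \<ge> 1" unfolding N_def by (simp add: Suc_le_eq)
  have \<alpha>x0: "\<alpha> \<le> x0" unfolding \<alpha>_def x0_def using assms(1) N_def by (intro alpha_le) auto
  have \<alpha>0: "0 \<le> \<alpha>" unfolding \<alpha>_def using assms(1) N_def by (intro alpha_nonneg) auto
  have x00: "0 \<le> x0" unfolding x0_def by simp
  have perr: "measure_pmf.prob Q {C. e \<notin> S C} \<le> gfun x0 N (card e)" for e :: "'n set"
  proof -
    define B where "B = {x. x \<notin> C1 \<and> card (vadd e x) \<le> card e}"
    have "{C. e \<notin> S C} \<inter> set_pmf Q \<subseteq> (\<Union>x\<in>B. {C. x \<in> C})"
    proof
      fix C assume C: "C \<in> {C. e \<notin> S C} \<inter> set_pmf Q"
      then have "lin_code C" "min_coset_rep C (G C)" using assms(3,5)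
        unfolding lin_code_dim_def by auto
      from bad_witness[OF this(2,1)] C obtain x where "x \<in> C" "x \<notin> C1" "card (vadd e x) \<le> card e"
        unfolding S_def by auto
      then show "C \<in> (\<Union>x\<in>B. {C. x \<in> C})" unfolding B_def by auto
    qed
    then have "measure_pmf.prob Q {C. e \<notin> S C} \<le> measure_pmf.prob Q (\<Union>x\<in>B. {C. x \<in> C})"
      by (metis measure_Int_set_pmf measure_pmf.finite_measure_mono sets_measure_pmf UNIV_I)
    also have "\<dots> \<le> (\<Sum>x\<in>B. measure_pmf.prob Q {C. x \<in> C})"
      by (rule measure_pmf.finite_measure_subadditive_finite) auto
    also have "\<dots> = real (card B) * \<alpha>"
      using assms(4) unfolding B_def \<alpha>_def N_def by simp
    finally have b1: "measure_pmf.prob Q {C. e \<notin> S C} \<le> real (card B) * \<alpha>" .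
    have cB: "card B \<le> (\<Sum>j\<le>card e. N choose j)"
    proof -
      have "card B \<le> card {x. card (vadd e x) \<le> card e}"
        unfolding B_def by (intro card_mono) auto
      then show ?thesis using count_ball[of e "card e"] unfolding N_def by simp
    qed
    have b2: "measure_pmf.prob Q {C. e \<notin> S C} \<le> 1" by simp
    show ?thesis
    proof (cases "card e \<le> N div 2")
      case True
      have "real (card B) * \<alpha> \<le> (\<Sum>j\<le>card e. real (N choose j)) * x0"
        using cB \<alpha>0 \<alpha>x0 by (intro mult_mono) (auto simp flip: of_nat_sum)
      also have "\<dots> \<le> 2 powr (real N * bin_entropy (real (card e) / real N)) * x0"
        using True N1 x00 by (intro mult_right_mono entropy_bound) auto
      finally show ?thesis using b1 b2 True unfolding gfun_def by simp
    next
      case False then show ?thesis using b2 unfolding gfun_def by simp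
    qed
  qed
  have lhs: "measure_pmf.expectation Q (\<lambda>C2. 1 - measure_pmf.prob PW (S C2))
      = (\<Sum>e\<in>UNIV. pmf PW e * measure_pmf.prob Q {C. e \<notin> S C})"
  proof -
    have f: "1 - measure_pmf.prob PW (S C) = (\<Sum>e\<in>UNIV. pmf PW e * (if e \<in> UNIV - S C then 1 else 0))" for C
      using measure_pmf.prob_compl[of "S C" PW] prob_as_sum[of PW "UNIV - S C"] by simp
    have "measure_pmf.expectation Q (\<lambda>C2. 1 - measure_pmf.prob PW (S C2))
        = (\<Sum>C\<in>UNIV. pmf Q C * (1 - measure_pmf.prob PW (S C)))"
      by (subst integral_measure_pmf[of UNIV]) auto
    also have "\<dots> = (\<Sum>C\<in>UNIV. \<Sum>e\<in>UNIV. pmf PW e * (pmf Q C * (if e \<in> UNIV - S C then 1 else 0)))"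
      unfolding f sum_distrib_left by (simp add: algebra_simps)
    also have "\<dots> = (\<Sum>e\<in>UNIV. \<Sum>C\<in>UNIV. pmf PW e * (pmf Q C * (if e \<in> UNIV - S C then 1 else 0)))"
      by (rule sum.swap)
    also have "\<dots> = (\<Sum>e\<in>UNIV. pmf PW e * measure_pmf.prob Q {C. e \<notin> S C})"
      unfolding prob_as_sum[of Q] sum_distrib_left by simp
    finally show ?thesis .
  qed
  have "(\<Sum>e\<in>UNIV. pmf PW e * measure_pmf.prob Q {C. e \<notin> S C})
      \<le> (\<Sum>e\<in>UNIV. pmf PW e * gfun x0 N (card e))"
    using perr by (intro sum_mono mult_left_mono) auto
  also have "\<dots> = (\<Sum>k\<le>N. \<Sum>e\<in>{e\<in>UNIV. card e = k}. pmf PW e * gfun x0 N (card e))"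
  proof (rule sum.group[symmetric])
    have "card (x::'n set) \<le> N" for x unfolding N_def
      by (rule card_mono) auto
    then show "card ` (UNIV::'n set set) \<subseteq> {..N}" by auto
  qed auto
  also have "\<dots> = (\<Sum>k\<le>N. measure_pmf.prob PW {e. hweight e = k} * gfun x0 N k)"
  proof (rule sum.cong[OF refl])
    fix k
    have "(\<Sum>e\<in>{e\<in>UNIV. card e = k}. pmf PW e * gfun x0 N (card e))
        = (\<Sum>e\<in>{e. card e = k}. pmf PW e) * gfun x0 N k"
      by (simp add: sum_distrib_right)
    then show "(\<Sum>e\<in>{e\<in>UNIV. card e = k}. pmf PW e * gfun x0 N (card e))
        = measure_pmf.prob PW {e. hweight e = k} * gfun x0 N k"
      by (simp add: measure_measure_pmf_finite hweight_def)
  qed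
  finally show ?thesis using lhs unfolding S_def x0_def N_def by simp
qed

end
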